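(* For every $n\geq1$ and all $k_1,\dots,k_n\geq0$ there are isomorphisms of $\Sigma$-spaces \[ \mathcal{P}^{(n)}\Delta[k_1,\dots,k_n]\;\cong\;\mathcal{P}\Delta[k_1]\times\dots\times\mathcal{P}\Delta[k_n]\;\cong\;N^{\mathrm{ex}}\mathrm{Ar}[k_1]\times\dots\times N^{\mathrm{ex}}\mathrm{Ar}[k_n]. \]
   Context: Let $\Delta$ be the simplex category and let $\Sigma$ be the category obtained from $\Delta\times\Delta$ by freely adjoining a terminal object $[-1]$. A $\Sigma$-space is a functor $\Sigma^{\mathrm{op}}\to\mathcal{S}$ to spaces (e.g. simplicial sets); equivalently, a bisimplicial space $X_{\bullet,\bullet}$ together with a space $X_{-1}$ and an augmentation map $X_{-1}\to X_{0,0}$ (induced by the unique map $([0],[0])\to[-1]$). Products of $\Sigma$-spaces are taken levelwise. Let $p\colon\Sigma\to\Delta$ be the ordinal sum functor, $[-1]\mapsto[0]$ and $([a],[b])\mapsto[a+1+b]$ (on morphisms: ordinal sum of maps, and the unique map to $[0]$ for maps to $[-1]$). Let $\mathcal{P}=p^*\colon\mathcal{S}^{\Delta^{\mathrm{op}}}\to\mathcal{S}^{\Sigma^{\mathrm{op}}}$ be precomposition with $p$. For $n\geq1$ let $p^{(n)}\colon\Sigma\to\Delta^{\times n}$ be $\sigma\mapsto(p(\sigma),\dots,p(\sigma))$ and $\mathcal{P}^{(n)}=(p^{(n)})^*\colon\mathcal{S}^{(\Delta^{\mathrm{op}})^{\times n}}\to\mathcal{S}^{\Sigma^{\mathrm{op}}}$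 precomposition with $p^{(n)}$. Here $\Delta[k]$ denotes the (discrete) simplicial space represented by $[k]$, and $\Delta[k_1,\dots,k_n]$ the (discrete) $n$-fold simplicial space represented by $([k_1],\dots,[k_n])$. For $k\geq0$, let $\mathrm{Ar}[k]=[k]^{[1]}$ be the arrow category of $[k]$, i.e. the poset of pairs $(i,j)$ with $0\le i\le j\le k$, with $(i,j)\le(i',j')$ iff $i\le i'$ and $j\le j'$. Call a morphism $(i,j)\to(i,j')$ horizontal and a morphism $(i,j)\to(i',j)$ vertical; the objects $(i,i)$ are the zero objects. The exact nerve $N^{\mathrm{ex}}\mathrm{Ar}[k]$ is the (discrete) $\Sigma$-space with $N^{\mathrm{ex}}_{-1}\mathrm{Ar}[k]$ the set of zero objects $(i,i)$, and $N^{\mathrm{ex}}_{a,b}\mathrm{Ar}[k]$ the set of exact functors $F\colon[a]\times[b]\to\mathrm{Ar}[k]$, i.e. functors sending each morphism $(i,j)\to(i,j+\ell)$ of $[a]\times[b]$ to a horizontal morphism and each morphism $(i,j)\to(i+m,j)$ to a vertical morphism (all commutative squares being allowed); the bisimplicial structure is given by precomposition with maps $[a']\times[b']\to[a]\times[b]$ induced by morphisms of $\Delta\times\Delta$, and the augmentation sends a zero object to the constant functor $[0]\times[0]\to\mathrm{Ar}[k]$ at it. *)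

theory Defs
  imports "HOL-Library.FuncSet"
begin

text \<open>Morphisms [c] -> [d] of Delta: monotone maps (only values on {0..c} matter).\<close>
definition dhom :: "nat \<Rightarrow> nat \<Rightarrow> (nat \<Rightarrow> nat) set" where
  "dhom c d = {f. (\<forall>i j. i \<le> j \<and> j \<le> c \<longrightarrow> f i \<le> f j) \<and> (\<forall>i\<le>c. f i \<le> d)}"

datatype sig = Neg | SP nat nat   (* Neg = [-1], SP a b = ([a],[b]) *)

datatype smor = ToNeg | PM "nat \<Rightarrow> nat" "nat \<Rightarrow> nat"

fun shom :: "sig \<Rightarrow> sig \<Rightarrow> smor set" where
  "shom _ Neg = {ToNeg}"
| "shom Neg (SP a b) = {}"
| "shom (SP a b) (SP a' b') = {PM f g | f g. f \<in> dhom a a' \<and> g \<in> dhom b b'}"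

text \<open>Ordinal sum functor p : Sigma -> Delta.\<close>
fun pobj :: "sig \<Rightarrow> nat" where
  "pobj Neg = 0"
| "pobj (SP a b) = a + 1 + b"

fun pmor :: "sig \<Rightarrow> sig \<Rightarrow> smor \<Rightarrow> (nat \<Rightarrow> nat)" where
  "pmor (SP a b) (SP a' b') (PM f g) = (\<lambda>i. if i \<le> a then f i else a' + 1 + g (i - (a + 1)))"
| "pmor _ _ _ = (\<lambda>_. 0)"

text \<open>A discrete presheaf is given by its sets of elements and its action;
  the action \<open>act c d f\<close> for a morphism \<open>f : c \<rightarrow> d\<close> maps elements over \<open>d\<close>
  to elements over \<open>c\<close>.\<close>

type_synonym 'x sspace = "(sig \<Rightarrow> 'x set) \<times> (sig \<Rightarrow> sig \<Rightarrow> smor \<Rightarrow> 'x \<Rightarrow> 'x)"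
type_synonym 'x simpspace = "(nat \<Rightarrow> 'x set) \<times> (nat \<Rightarrow> nat \<Rightarrow> (nat \<Rightarrow> nat) \<Rightarrow> 'x \<Rightarrow> 'x)"
type_synonym 'x msimpspace =
  "(nat list \<Rightarrow> 'x set) \<times> (nat list \<Rightarrow> nat list \<Rightarrow> (nat \<Rightarrow> nat) list \<Rightarrow> 'x \<Rightarrow> 'x)"

definition sigma_iso :: "'x sspace \<Rightarrow> 'y sspace \<Rightarrow> bool" where
  "sigma_iso X Y \<longleftrightarrow> (\<exists>\<phi> :: sig \<Rightarrow> 'x \<Rightarrow> 'y.
     (\<forall>\<sigma>. bij_betw (\<phi> \<sigma>) (fst X \<sigma>) (fst Y \<sigma>)) \<and>
     (\<forall>\<sigma> \<tau>. \<forall>f\<in>shom \<sigma> \<tau>. \<forall>x\<in>fst X \<tau>.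
        \<phi> \<sigma> (snd X \<sigma> \<tau> f x) = snd Y \<sigma> \<tau> f (\<phi> \<tau> x)))"

definition sprod :: "'x sspace list \<Rightarrow> 'x list sspace" where
  "sprod Xs = ((\<lambda>\<sigma>. {xs. length xs = length Xs \<and> (\<forall>i<length Xs. xs ! i \<in> fst (Xs ! i) \<sigma>)}),
               (\<lambda>\<sigma> \<tau> f xs. map (\<lambda>i. snd (Xs ! i) \<sigma> \<tau> f (xs ! i)) [0..<length Xs]))"

text \<open>Delta[k]: m-simplices are monotone maps [m] -> [k], encoded as sorted lists of
  length m+1 with entries \<le> k; action by precomposition.\<close>
definition DeltaRep :: "nat \<Rightarrow> nat list simpspace" where
  "DeltaRep k = ((\<lambda>m. {xs. length xs = m + 1 \<and> sorted xs \<and> (\<forall>x\<in>set xs. x \<le> k)}),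
                 (\<lambda>c d \<alpha> xs. map (\<lambda>i. xs ! (\<alpha> i)) [0..<c + 1]))"

text \<open>Delta[k_1,...,k_n]: n-fold simplicial set, (m_1,...,m_n)-simplices are tuples of
  monotone maps [m_i] -> [k_i]; morphisms are lists of Delta-maps.\<close>
definition DeltaRepN :: "nat list \<Rightarrow> nat list list msimpspace" where
  "DeltaRepN ks = ((\<lambda>ms. {xss. length ms = length ks \<and> length xss = length ks \<and>
                      (\<forall>i<length ks. length (xss ! i) = ms ! i + 1 \<and> sorted (xss ! i) \<and>
                          (\<forall>x\<in>set (xss ! i). x \<le> ks ! i))}),
                   (\<lambda>cs ds \<alpha>s xss. map (\<lambda>i. map (\<lambda>j. (xss ! i) ! ((\<alpha>s ! i) j)) [0..<cs ! i + 1])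
                                       [0..<length ks]))"

definition Pfun :: "'x simpspace \<Rightarrow> 'x sspace" where
  "Pfun X = ((\<lambda>\<sigma>. fst X (pobj \<sigma>)),
             (\<lambda>\<sigma> \<tau> f. snd X (pobj \<sigma>) (pobj \<tau>) (pmor \<sigma> \<tau> f)))"

definition PfunN :: "nat \<Rightarrow> 'x msimpspace \<Rightarrow> 'x sspace" where
  "PfunN n X = ((\<lambda>\<sigma>. fst X (replicate n (pobj \<sigma>))),
                (\<lambda>\<sigma> \<tau> f. snd X (replicate n (pobj \<sigma>)) (replicate n (pobj \<tau>))
                                (replicate n (pmor \<sigma> \<tau> f))))"

text \<open>Elements over [-1] are zero objects (Inl (i,i)); elements over ([a],[b]) are exact
  functors [a]x[b] -> Ar[k], encoded as extensional functions on {0..a}x{0..b} (Inr F).\<close>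

definition arobj :: "nat \<Rightarrow> nat \<times> nat \<Rightarrow> bool" where
  "arobj k x \<longleftrightarrow> fst x \<le> snd x \<and> snd x \<le> k"

definition exact_functor :: "nat \<Rightarrow> nat \<Rightarrow> nat \<Rightarrow> (nat \<times> nat \<Rightarrow> nat \<times> nat) \<Rightarrow> bool" where
  "exact_functor k a b F \<longleftrightarrow>
     F \<in> extensional ({0..a} \<times> {0..b}) \<and>
     (\<forall>i\<le>a. \<forall>j\<le>b. arobj k (F (i, j))) \<and>
     \<comment> \<open>functoriality = monotonicity (Ar[k] is a poset)\<close>
     (\<forall>i i' j j'. i \<le> i' \<and> i' \<le> a \<and> j \<le> j' \<and> j' \<le> b \<longrightarrow>
        fst (F (i, j)) \<le> fst (F (i', j')) \<and> snd (F (i, j)) \<le> snd (F (i', j'))) \<and>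
     \<comment> \<open>morphisms (i,j) -> (i,j+l) go to horizontal morphisms\<close>
     (\<forall>i j j'. i \<le> a \<and> j \<le> j' \<and> j' \<le> b \<longrightarrow> fst (F (i, j)) = fst (F (i, j'))) \<and>
     \<comment> \<open>morphisms (i,j) -> (i+m,j) go to vertical morphisms\<close>
     (\<forall>i i' j. i \<le> i' \<and> i' \<le> a \<and> j \<le> b \<longrightarrow> snd (F (i, j)) = snd (F (i', j)))"

fun nex_obj :: "nat \<Rightarrow> sig \<Rightarrow> ((nat \<times> nat) + (nat \<times> nat \<Rightarrow> nat \<times> nat)) set" where
  "nex_obj k Neg = Inl ` {(i, i) | i. i \<le> k}"
| "nex_obj k (SP a b) = Inr ` {F. exact_functor k a b F}"

fun nex_act :: "sig \<Rightarrow> sig \<Rightarrow> smor \<Rightarrow> ((nat \<times> nat) + (nat \<times> nat \<Rightarrow> nat \<times> nat))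
                 \<Rightarrow> ((nat \<times> nat) + (nat \<times> nat \<Rightarrow> nat \<times> nat))" where
  "nex_act Neg Neg _ x = x"
| "nex_act (SP a b) Neg _ (Inl z) = Inr (restrict (\<lambda>_. z) ({0..a} \<times> {0..b}))"
| "nex_act (SP a b) (SP a' b') (PM f g) (Inr F) =
     Inr (restrict (\<lambda>(i, j). F (f i, g j)) ({0..a} \<times> {0..b}))"
| "nex_act _ _ _ x = x"

definition NexAr :: "nat \<Rightarrow> ((nat \<times> nat) + (nat \<times> nat \<Rightarrow> nat \<times> nat)) sspace" where
  "NexAr k = (nex_obj k, nex_act)"

end

theory Submission
  imports Defs
begin

fun phi1 :: "sig \<Rightarrow> nat list \<Rightarrow> (nat \<times> nat) + (nat \<times> nat \<Rightarrow> nat \<times> nat)" where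
  "phi1 Neg xs = Inl (xs!0, xs!0)"
| "phi1 (SP a b) xs = Inr (restrict (\<lambda>(i,j). (xs!i, xs!(a+1+j))) ({0..a}\<times>{0..b}))"

fun psi1 :: "sig \<Rightarrow> (nat \<times> nat) + (nat \<times> nat \<Rightarrow> nat \<times> nat) \<Rightarrow> nat list" where
  "psi1 Neg y = (case y of Inl z \<Rightarrow> [fst z] | _ \<Rightarrow> [])"
| "psi1 (SP a b) y = (case y of Inr F \<Rightarrow>
      map (\<lambda>i. if i \<le> a then fst (F (i,0)) else snd (F (0, i-(a+1)))) [0..<a+b+2] | _ \<Rightarrow> [])"

lemma DR_set: "fst (Pfun (DeltaRep k)) \<sigma> = {xs. length xs = pobj \<sigma> + 1 \<and> sorted xs \<and> (\<forall>x\<in>set xs. x \<le> k)}"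
  by (simp add: Pfun_def DeltaRep_def)

lemma NA_set: "fst (NexAr k) \<sigma> = nex_obj k \<sigma>"
  by (simp add: NexAr_def)

lemma comp_bij_neg: "bij_betw (phi1 Neg) (fst (Pfun (DeltaRep k)) Neg) (fst (NexAr k) Neg)"
proof (rule bij_betw_byWitness[where f'="psi1 Neg"])
  show "\<forall>a\<in>fst (Pfun (DeltaRep k)) Neg. psi1 Neg (phi1 Neg a) = a"
    unfolding DR_set by (auto simp: length_Suc_conv)
  show "\<forall>a'\<in>fst (NexAr k) Neg. phi1 Neg (psi1 Neg a') = a'"
    unfolding NA_set by auto
  show "phi1 Neg ` fst (Pfun (DeltaRep k)) Neg \<subseteq> fst (NexAr k) Neg"
    unfolding DR_set NA_set by (auto simp: length_Suc_conv)
  show "psi1 Neg ` fst (NexAr k) Neg \<subseteq> fst (Pfun (DeltaRep k)) Neg"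
    unfolding DR_set NA_set by auto
qed

lemma comp_bij_sp: "bij_betw (phi1 (SP a b)) (fst (Pfun (DeltaRep k)) (SP a b)) (fst (NexAr k) (SP a b))"
proof (rule bij_betw_byWitness[where f'="psi1 (SP a b)"])
  show "\<forall>x\<in>fst (Pfun (DeltaRep k)) (SP a b). psi1 (SP a b) (phi1 (SP a b) x) = x"
  proof
    fix xs assume "xs \<in> fst (Pfun (DeltaRep k)) (SP a b)"
    then have L: "length xs = a + b + 2" unfolding DR_set by simp
    show "psi1 (SP a b) (phi1 (SP a b) xs) = xs"
      by (rule nth_equalityI) (auto simp: L simp del: upt_Suc)
  qed
  show "\<forall>y\<in>fst (NexAr k) (SP a b). phi1 (SP a b) (psi1 (SP a b) y) = y"
  proof
    fix y assume "y \<in> fst (NexAr k) (SP a b)"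
    then obtain F where y: "y = Inr F" and E: "exact_functor k a b F" unfolding NA_set by auto
    have "restrict (\<lambda>(i,j). (psi1 (SP a b) y!i, psi1 (SP a b) y!(a+1+j))) ({0..a}\<times>{0..b}) = F"
    proof (rule extensionalityI[where A="{0..a}\<times>{0..b}"])
      show "F \<in> extensional ({0..a}\<times>{0..b})" using E unfolding exact_functor_def by blast
      fix p assume p: "p \<in> {0..a}\<times>{0..b}"
      then obtain i j where ij: "p = (i,j)" "i \<le> a" "j \<le> b" by auto
      have "fst (F (i,0)) = fst (F (i,j))" using E ij unfolding exact_functor_def by auto
      moreover have "snd (F (0,j)) = snd (F (i,j))" using E ij unfolding exact_functor_def by auto
      ultimately show "restrict (\<lambda>(i,j). (psi1 (SP a b) y!i, psi1 (SP a b) y!(a+1+j))) ({0..a}\<times>{0..b}) p = F p"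
      proof -
        have n1: "psi1 (SP a b) y ! i = fst (F (i,0))" using ij y by (simp del: upt_Suc)
        have n2: "psi1 (SP a b) y ! (a+1+j) = snd (F (0,j))" using ij y by (simp del: upt_Suc)
        show ?thesis using p ij n1 n2 \<open>fst (F (i,0)) = fst (F (i,j))\<close> \<open>snd (F (0,j)) = snd (F (i,j))\<close>
          unfolding ij(1) by (simp add: prod_eq_iff del: psi1.simps)
      qed
    qed auto
    then show "phi1 (SP a b) (psi1 (SP a b) y) = y" using y by simp
  qed
  show "phi1 (SP a b) ` fst (Pfun (DeltaRep k)) (SP a b) \<subseteq> fst (NexAr k) (SP a b)"
  proof
    fix y assume "y \<in> phi1 (SP a b) ` fst (Pfun (DeltaRep k)) (SP a b)"
    then obtain xs where y: "y = phi1 (SP a b) xs" and L: "length xs = a + b + 2"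
      and S: "sorted xs" and B: "\<forall>x\<in>set xs. x \<le> k" unfolding DR_set by auto
    have mono: "xs ! i \<le> xs ! j" if "i \<le> j" "j < a + b + 2" for i j
      using S that L by (simp add: sorted_iff_nth_mono)
    have bd: "xs ! i \<le> k" if "i < a + b + 2" for i using B that L by auto
    have "exact_functor k a b (restrict (\<lambda>(i,j). (xs!i, xs!(a+1+j))) ({0..a}\<times>{0..b}))"
      unfolding exact_functor_def arobj_def
      by (auto intro!: mono bd)
    then show "y \<in> fst (NexAr k) (SP a b)" unfolding NA_set y by simp
  qed
  show "psi1 (SP a b) ` fst (NexAr k) (SP a b) \<subseteq> fst (Pfun (DeltaRep k)) (SP a b)"
  proof
    fix xs assume "xs \<in> psi1 (SP a b) ` fst (NexAr k) (SP a b)"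
    then have "xs \<in> (\<lambda>F. psi1 (SP a b) (Inr F)) ` {F. exact_functor k a b F}"
      by (simp only: NA_set nex_obj.simps image_image)
    then obtain F where xs: "xs = psi1 (SP a b) (Inr F)" and E: "exact_functor k a b F"
      by blast
    have E1: "\<forall>i\<le>a. \<forall>j\<le>b. arobj k (F (i, j))"
      using E unfolding exact_functor_def by (elim conjE) assumption
    have E2: "\<forall>i i' j j'. i \<le> i' \<and> i' \<le> a \<and> j \<le> j' \<and> j' \<le> b \<longrightarrow>
        fst (F (i, j)) \<le> fst (F (i', j')) \<and> snd (F (i, j)) \<le> snd (F (i', j'))"
      using E unfolding exact_functor_def by (elim conjE) assumption
    have E3: "\<forall>i i' j. i \<le> i' \<and> i' \<le> a \<and> j \<le> b \<longrightarrow> snd (F (i, j)) = snd (F (i', j))"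
      using E unfolding exact_functor_def by (elim conjE) assumption
    have ar: "\<And>i j. i \<le> a \<Longrightarrow> j \<le> b \<Longrightarrow> fst (F (i,j)) \<le> snd (F (i,j)) \<and> snd (F (i,j)) \<le> k"
      using E1 unfolding arobj_def by simp
    have mo: "\<And>i i' j j'. i \<le> i' \<Longrightarrow> i' \<le> a \<Longrightarrow> j \<le> j' \<Longrightarrow> j' \<le> b \<Longrightarrow>
        fst (F (i, j)) \<le> fst (F (i', j')) \<and> snd (F (i, j)) \<le> snd (F (i', j'))"
      using E2 by simp
    have ve: "\<And>i i' j. i \<le> i' \<Longrightarrow> i' \<le> a \<Longrightarrow> j \<le> b \<Longrightarrow> snd (F (i, j)) = snd (F (i', j))"
      using E3 by simp
    have L: "length xs = a + b + 2" using xs by simp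
    have nth: "xs ! i = (if i \<le> a then fst (F (i,0)) else snd (F (0, i-(a+1))))" if "i < a+b+2" for i
      using xs that by (simp del: upt_Suc)
    have S: "sorted xs"
      unfolding sorted_iff_nth_mono
    proof (intro allI impI)
      fix i j assume ij: "i \<le> j" "j < length xs"
      show "xs ! i \<le> xs ! j"
      proof (cases "j \<le> a")
        case True then show ?thesis using ij L nth mo[of i j 0 0] by simp
      next
        case jf: False
        show ?thesis
        proof (cases "i \<le> a")
          case True
          have "fst (F (i,0)) \<le> snd (F (i,0))" using ar True by simp
          also have "\<dots> = snd (F (0,0))" using ve[of 0 i 0] True by simp
          also have "\<dots> \<le> snd (F (0, j-(a+1)))" using mo[of 0 0 0 "j-(a+1)"] ij L jf by simp
          finally show ?thesis using ij L nth True jf by simp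
        next
          case False
          then show ?thesis using ij L nth jf mo[of 0 0 "i-(a+1)" "j-(a+1)"] by simp
        qed
      qed
    qed
    have B: "\<forall>x\<in>set xs. x \<le> k"
    proof
      fix x assume "x \<in> set xs"
      then obtain i where i: "i < length xs" "x = xs ! i" by (auto simp: in_set_conv_nth)
      show "x \<le> k"
      proof (cases "i \<le> a")
        case True then show ?thesis using i L nth ar[of i 0] by fastforce
      next
        case False then show ?thesis using i L nth ar[of 0 "i-(a+1)"] by fastforce
      qed
    qed
    show "xs \<in> fst (Pfun (DeltaRep k)) (SP a b)" unfolding DR_set using L S B by simp
  qed
qed

lemma comp_bij: "bij_betw (phi1 \<sigma>) (fst (Pfun (DeltaRep k)) \<sigma>) (fst (NexAr k) \<sigma>)"
  by (cases \<sigma>) (auto intro: comp_bij_neg comp_bij_sp)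

lemma comp_nat:
  assumes "f \<in> shom \<sigma> \<tau>" "x \<in> fst (Pfun (DeltaRep k)) \<tau>"
  shows "phi1 \<sigma> (snd (Pfun (DeltaRep k)) \<sigma> \<tau> f x) = snd (NexAr k) \<sigma> \<tau> f (phi1 \<tau> x)"
proof (cases \<tau>)
  case Neg
  then have f: "f = ToNeg" using assms by (cases \<sigma>) auto
  show ?thesis
  proof (cases \<sigma>)
    case Neg then show ?thesis using assms f \<open>\<tau> = Neg\<close>
      by (auto simp: Pfun_def DeltaRep_def NexAr_def)
  next
    case (SP a b) then show ?thesis using assms f \<open>\<tau> = Neg\<close>
      by (auto simp: Pfun_def DeltaRep_def NexAr_def restrict_def fun_eq_iff simp del: upt_Suc)
  qed
next
  case (SP a' b')
  then obtain a b where s: "\<sigma> = SP a b" using assms by (cases \<sigma>) auto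
  then obtain g h where f: "f = PM g h" "g \<in> dhom a a'" "h \<in> dhom b b'" using assms SP by auto
  have L: "length x = a' + b' + 2" using assms SP unfolding DR_set by simp
  show ?thesis using s SP f L
    by (auto simp: Pfun_def DeltaRep_def NexAr_def restrict_def fun_eq_iff dhom_def nth_append
         simp del: upt_Suc)
qed

lemma prod_bij:
  assumes "\<And>i. i < length Xs \<Longrightarrow> bij_betw g (fst (Xs ! i) \<sigma>) (fst (Ys ! i) \<sigma>)"
    and "length Ys = length Xs"
  shows "bij_betw (map g) (fst (sprod Xs) \<sigma>) (fst (sprod Ys) \<sigma>)"
proof (rule bij_betw_byWitness[where f'="\<lambda>ys. map (\<lambda>i. inv_into (fst (Xs ! i) \<sigma>) g (ys ! i)) [0..<length Xs]"])
  show "\<forall>a\<in>fst (sprod Xs) \<sigma>. map (\<lambda>i. inv_into (fst (Xs ! i) \<sigma>) g (map g a ! i)) [0..<length Xs] = a"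
    using assms by (auto simp: sprod_def bij_betw_def intro!: nth_equalityI)
  show "\<forall>a'\<in>fst (sprod Ys) \<sigma>. map g (map (\<lambda>i. inv_into (fst (Xs ! i) \<sigma>) g (a' ! i)) [0..<length Xs]) = a'"
  proof
    fix ys assume "ys \<in> fst (sprod Ys) \<sigma>"
    then have L: "length ys = length Xs" and yi0: "\<And>i. i < length Xs \<Longrightarrow> ys ! i \<in> fst (Ys ! i) \<sigma>"
      using assms(2) by (simp_all add: sprod_def)
    have yi: "ys ! i \<in> g ` fst (Xs ! i) \<sigma>" if "i < length Xs" for i
      using yi0[OF that] bij_betw_imp_surj_on[OF assms(1)[OF that]] by simp
    show "map g (map (\<lambda>i. inv_into (fst (Xs ! i) \<sigma>) g (ys ! i)) [0..<length Xs]) = ys"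
      by (rule nth_equalityI) (auto simp: L f_inv_into_f[OF yi])
  qed
  show "map g ` fst (sprod Xs) \<sigma> \<subseteq> fst (sprod Ys) \<sigma>"
  proof
    fix ys assume "ys \<in> map g ` fst (sprod Xs) \<sigma>"
    then obtain xs where ys: "ys = map g xs" and xs: "xs \<in> fst (sprod Xs) \<sigma>" by blast
    then have L: "length xs = length Xs"
      and xi: "\<And>i. i < length Xs \<Longrightarrow> xs ! i \<in> fst (Xs ! i) \<sigma>"
      by (simp_all add: sprod_def)
    have "g (xs ! i) \<in> fst (Ys ! i) \<sigma>" if "i < length Xs" for i
      using bij_betw_imp_surj_on[OF assms(1)[OF that]] xi[OF that] by blast
    then show "ys \<in> fst (sprod Ys) \<sigma>" using ys L assms(2) by (simp add: sprod_def)
  qed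
  show "(\<lambda>ys. map (\<lambda>i. inv_into (fst (Xs ! i) \<sigma>) g (ys ! i)) [0..<length Xs]) ` fst (sprod Ys) \<sigma> \<subseteq> fst (sprod Xs) \<sigma>"
  proof
    fix xs assume "xs \<in> (\<lambda>ys. map (\<lambda>i. inv_into (fst (Xs ! i) \<sigma>) g (ys ! i)) [0..<length Xs]) ` fst (sprod Ys) \<sigma>"
    then obtain ys where xs: "xs = map (\<lambda>i. inv_into (fst (Xs ! i) \<sigma>) g (ys ! i)) [0..<length Xs]"
      and ys: "ys \<in> fst (sprod Ys) \<sigma>" by blast
    then have yi: "\<And>i. i < length Xs \<Longrightarrow> ys ! i \<in> fst (Ys ! i) \<sigma>"
      using assms(2) by (simp add: sprod_def)
    have "inv_into (fst (Xs ! i) \<sigma>) g (ys ! i) \<in> fst (Xs ! i) \<sigma>" if "i < length Xs" for i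
      using bij_betw_imp_surj_on[OF assms(1)[OF that]] yi[OF that] by (metis inv_into_into)
    then show "xs \<in> fst (sprod Xs) \<sigma>" using xs by (simp add: sprod_def)
  qed
qed

theorem mainTheorem1:
  fixes n :: nat and ks :: "nat list"
  assumes "n \<ge> 1" and "length ks = n"
  shows "sigma_iso (PfunN n (DeltaRepN ks)) (sprod (map (\<lambda>k. Pfun (DeltaRep k)) ks))
       \<and> sigma_iso (sprod (map (\<lambda>k. Pfun (DeltaRep k)) ks)) (sprod (map NexAr ks))"
proof
  show "sigma_iso (PfunN n (DeltaRepN ks)) (sprod (map (\<lambda>k. Pfun (DeltaRep k)) ks))"
    unfolding sigma_iso_def
  proof (intro exI[where x="\<lambda>_ x. x"] conjI allI ballI)
    fix \<sigma>
    show "bij_betw (\<lambda>x. x) (fst (PfunN n (DeltaRepN ks)) \<sigma>) (fst (sprod (map (\<lambda>k. Pfun (DeltaRep k)) ks)) \<sigma>)"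
      using assms(2) by (auto simp: PfunN_def DeltaRepN_def sprod_def Pfun_def DeltaRep_def bij_betw_def)
  next
    fix \<sigma> \<tau> f x
    assume "x \<in> fst (PfunN n (DeltaRepN ks)) \<tau>"
    then show "snd (PfunN n (DeltaRepN ks)) \<sigma> \<tau> f x = snd (sprod (map (\<lambda>k. Pfun (DeltaRep k)) ks)) \<sigma> \<tau> f x"
      using assms(2) by (auto simp: PfunN_def DeltaRepN_def sprod_def Pfun_def DeltaRep_def)
  qed
next
  show "sigma_iso (sprod (map (\<lambda>k. Pfun (DeltaRep k)) ks)) (sprod (map NexAr ks))"
    unfolding sigma_iso_def
  proof (intro exI[where x="\<lambda>\<sigma>. map (phi1 \<sigma>)"] conjI allI ballI)
    fix \<sigma>
    show "bij_betw (map (phi1 \<sigma>)) (fst (sprod (map (\<lambda>k. Pfun (DeltaRep k)) ks)) \<sigma>) (fst (sprod (map NexAr ks)) \<sigma>)"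
      by (rule prod_bij) (auto intro: comp_bij)
  next
    fix \<sigma> \<tau> f x
    assume f: "f \<in> shom \<sigma> \<tau>" and x: "x \<in> fst (sprod (map (\<lambda>k. Pfun (DeltaRep k)) ks)) \<tau>"
    then have L: "length x = length ks" and xi: "\<And>i. i < length ks \<Longrightarrow> x ! i \<in> fst (Pfun (DeltaRep (ks ! i))) \<tau>"
      by (auto simp: sprod_def)
    show "map (phi1 \<sigma>) (snd (sprod (map (\<lambda>k. Pfun (DeltaRep k)) ks)) \<sigma> \<tau> f x) =
          snd (sprod (map NexAr ks)) \<sigma> \<tau> f (map (phi1 \<tau>) x)"
      using L comp_nat[OF f xi] by (auto simp: sprod_def intro!: nth_equalityI)
  qed
qed

end
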